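(* Under the FP-UCB algorithm, for every horizon $T$, $$\sum_{k=1}^{T}\mathbb{P}\big(a^*(\theta^o)\notin A_k\big)\le 4|A|,$$ where $A_k$ is the set computed in episode $k$ (taken to be defined for all $k\le T$ by continuing the algorithm's rule).
   Context: Setting: there are $L$ arms $[L]=\{1,\dots,L\}$ and a known finite parameter set $\Theta$. For each $\theta\in\Theta$ and arm $i$, $P_i(\cdot;\theta)$ is a known probability distribution supported on $[0,1]$ with known mean $\mu_i(\theta)$. An unknown true parameter $\theta^o\in\Theta$ governs the rewards: the reward $X_i(\tau)$ from the $\tau$-th pull of arm $i$ is drawn from $P_i(\cdot;\theta^o)$; rewards of a given arm are i.i.d. and independent across arms. Let $a^*(\theta)=\arg\max_{i\in[L]}\mu_i(\theta)$, assumed unique for every $\theta\in\Theta$. Logarithms are natural. Notation: $n_i(t)=\sum_{\tau=1}^t \mathbb{1}\{a(\tau)=i\}$; $\hat\mu_i(t)=\frac{1}{n_i(t)}\sum_{\tau=1}^{n_i(t)}X_i(\tau)$; $A=\{a^*(\theta):\theta\in\Theta\}$. FP-UCB algorithm: at times $t=1,\dots,|A|$ select each arm of $A$ once. Then set episode counter $k=1$, $t=|A|+1$, and repeatedly: let $t_k=t-1$ and compute $A_k=\{a^*(\theta):\theta\in\Theta,\ \forall i\in A,\ |\hat\mu_i(t_k)-\mu_i(\theta)|\le\sqrt{3\log(k)/n_i(t_k)}\}$; if $A_k\ne\varnothing$, select each arm of $A_k$ once ($t\leftarrow t+|A_k|$), otherwise select each arm of $A$ once ($t\leftarrow t+|A|$);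 then $k\leftarrow k+1$. *)

theory Defs
  imports "HOL-Probability.Probability"
begin

text \<open>Arms are the natural numbers 1..L; parameters have type 'th; the mean of arm i
  under parameter th is mu i th.  The optimal arm a*(th) is the (assumed unique) maximiser.\<close>

definition astar :: "(nat \<Rightarrow> 'th \<Rightarrow> real) \<Rightarrow> nat \<Rightarrow> 'th \<Rightarrow> nat" where
  "astar mu L th = (THE i. i \<in> {1..L} \<and> (\<forall>j\<in>{1..L}. mu j th \<le> mu i th))"

definition optset :: "'th set \<Rightarrow> (nat \<Rightarrow> 'th \<Rightarrow> real) \<Rightarrow> nat \<Rightarrow> nat set" where
  "optset Th mu L = astar mu L ` Th"

text \<open>Empirical mean of arm i after c pulls; x i tau is the reward of the tau-th pull
  (tau \<ge> 1) of arm i.\<close>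
definition empmean :: "(nat \<Rightarrow> nat \<Rightarrow> real) \<Rightarrow> nat \<Rightarrow> nat \<Rightarrow> real" where
  "empmean x c i = (\<Sum>tau = 1..c. x i tau) / real c"

definition episet :: "'th set \<Rightarrow> (nat \<Rightarrow> 'th \<Rightarrow> real) \<Rightarrow> nat \<Rightarrow> (nat \<Rightarrow> nat \<Rightarrow> real)
    \<Rightarrow> nat \<Rightarrow> (nat \<Rightarrow> nat) \<Rightarrow> nat set" where
  "episet Th mu L x k c =
     {astar mu L th | th. th \<in> Th \<and>
        (\<forall>i\<in>optset Th mu L. \<bar>empmean x (c i) i - mu i th\<bar> \<le> sqrt (3 * ln (real k) / real (c i)))}"

text \<open>Pull counts n_i(t_k) at the end of episode k (k = 0: after the initial phase,
  i.e. at time |A|).  Within an episode the order of pulls is irrelevant for counts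
  and empirical means, since rewards of arm i are indexed by its pull number.\<close>
fun fp_counts :: "'th set \<Rightarrow> (nat \<Rightarrow> 'th \<Rightarrow> real) \<Rightarrow> nat \<Rightarrow> (nat \<Rightarrow> nat \<Rightarrow> real)
    \<Rightarrow> nat \<Rightarrow> nat \<Rightarrow> nat" where
  "fp_counts Th mu L x 0 = (\<lambda>i. if i \<in> optset Th mu L then 1 else 0)"
| "fp_counts Th mu L x (Suc k) =
     (let S = episet Th mu L x (Suc k) (fp_counts Th mu L x k) in
      (\<lambda>i. fp_counts Th mu L x k i +
            (if S \<noteq> {} then (if i \<in> S then 1 else 0)
             else (if i \<in> optset Th mu L then 1 else 0))))"

definition fp_A :: "'th set \<Rightarrow> (nat \<Rightarrow> 'th \<Rightarrow> real) \<Rightarrow> nat \<Rightarrow> (nat \<Rightarrow> nat \<Rightarrow> real)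
    \<Rightarrow> nat \<Rightarrow> nat set" where
  "fp_A Th mu L x k = episet Th mu L x k (fp_counts Th mu L x (k - 1))"

end

theory Submission imports Defs begin

lemma (in prob_space) indep_sets_reindex:
  assumes "indep_sets F (f ` J)" "inj_on f J"
  shows "indep_sets (\<lambda>j. F (f j)) J"
  unfolding indep_sets_def
proof (intro conjI ballI allI impI)
  fix j assume "j \<in> J" then show "F (f j) \<subseteq> events"
    using assms(1) unfolding indep_sets_def by auto
next
  fix K A assume K: "K \<subseteq> J" "K \<noteq> {}" "finite K" and A: "A \<in> Pi K (\<lambda>j. F (f j))"
  have injK: "inj_on f K" using assms(2) K(1) inj_on_subset by blast
  define B where "B = (\<lambda>y. A (the_inv_into K f y))"
  have Bf: "\<And>j. j \<in> K \<Longrightarrow> B (f j) = A j"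
    unfolding B_def using the_inv_into_f_f[OF injK] by simp
  have "B \<in> Pi (f ` K) F" using A Bf by auto
  moreover have "f ` K \<subseteq> f ` J" "f ` K \<noteq> {}" "finite (f ` K)" using K by auto
  ultimately have "prob (\<Inter>y\<in>f ` K. B y) = (\<Prod>y\<in>f ` K. prob (B y))"
    using assms(1) unfolding indep_sets_def by blast
  moreover have "(\<Inter>y\<in>f ` K. B y) = (\<Inter>j\<in>K. A j)" using Bf by auto
  moreover have "(\<Prod>y\<in>f ` K. prob (B y)) = (\<Prod>j\<in>K. prob (A j))"
    using prod.reindex[OF injK, of "\<lambda>y. prob (B y)"] Bf by simp
  ultimately show "prob (\<Inter>j\<in>K. A j) = (\<Prod>j\<in>K. prob (A j))" by simp
qed

lemma (in prob_space) indep_vars_reindex: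
  assumes "indep_vars F X (f ` J)" "inj_on f J"
  shows "indep_vars (\<lambda>j. F (f j)) (\<lambda>j. X (f j)) J"
  using assms unfolding indep_vars_def
  by (auto intro: indep_sets_reindex[where F="\<lambda>i. sigma_sets (space M) {X i -` A \<inter> space M |A. A \<in> sets (F i)}"])

lemma hoeff:
  fixes M :: "'w measure" and Z :: "nat \<Rightarrow> 'w \<Rightarrow> real" and Q :: "real measure"
  assumes "prob_space M" "prob_space.indep_vars M (\<lambda>_. borel) Z {1..s}"
    and "\<And>tau. tau \<in> {1..s} \<Longrightarrow> distr M borel (Z tau) = Q"
    and "\<And>tau. tau \<in> {1..s} \<Longrightarrow> Z tau \<in> borel_measurable M"
    and "sets Q = sets borel" "emeasure Q {0..1} = 1" "prob_space Q"
    and "m = (\<integral>r. r \<partial>Q)" "s \<ge> 1" "\<epsilon> \<ge> 0"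
  shows "measure M {w\<in>space M. \<epsilon> \<le> \<bar>(\<Sum>tau\<in>{1..s}. Z tau w) / real s - m\<bar>}
           \<le> 2 * exp (-2 * real s * \<epsilon>\<^sup>2)"
proof -
  interpret prob_space M by fact
  interpret Q: prob_space Q by fact
  have s1: "(1::nat) \<in> {1..s}" using assms(9) by simp
  have d: "distr M borel (Z 1) = Q" using assms(3)[OF s1] .
  have rv: "random_variable borel (Z 1)" using assms(4)[OF s1] by simp
  have sQ: "{0..1::real} \<in> sets Q" using assms(5) by simp
  have "Q.prob {0..1} = 1" using assms(6) Q.emeasure_eq_measure by simp
  then have "AE x in Q. x \<in> {0..1}" using Q.AE_in_set_eq_1[OF sQ] by simp
  then have "AE x in distr M borel (Z 1). x \<in> {0..1}" by (simp only: d)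
  then have AE: "AE x in M. Z 1 x \<in> {0..1}" by (subst (asm) AE_distr_iff) (use rv in simp_all)
  have mexp: "m = expectation (Z 1)"
  proof -
    have "expectation (Z 1) = (\<integral>r. r \<partial>distr M borel (Z 1))"
      by (rule integral_distr[symmetric]) (use rv in simp_all)
    then show ?thesis using d assms(8) by simp
  qed
  have dX: "distr M borel (Z i) = distr M borel (Z 1)" if "i \<in> {1..s}" for i
    using assms(3)[OF that] d by simp
  interpret H: Hoeffding_ineq_iid M "{1..s}" Z "Z 1" 0 1 "expectation (Z 1)"
  proof (unfold_locales)
    show "finite {1..s}" by simp
  qed (fact assms(2) | fact rv | fact AE | rule dX, assumption | rule refl)+
  have ne: "{1..s} \<noteq> {}" using assms(9) by simp
  have c: "card {1..s} = s" by simp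
  have h: "prob {x \<in> space M. \<epsilon> \<le> \<bar>(\<Sum>i = 1..s. Z i x) / real (card {1..s}) - expectation (Z 1)\<bar>}
     \<le> 2 * exp (- 2 * real (card {1..s}) * \<epsilon>\<^sup>2 / (1 - 0)\<^sup>2)"
    by (rule H.Hoeffding_ineq_abs_ge'[OF assms(10) zero_less_one ne])
  show ?thesis using h unfolding c mexp by simp
qed

lemma counts_step:
  "fp_counts Th mu L x k i \<le> fp_counts Th mu L x (Suc k) i \<and>
   fp_counts Th mu L x (Suc k) i \<le> Suc (fp_counts Th mu L x k i)"
proof -
  define S where "S = episet Th mu L x (Suc k) (fp_counts Th mu L x k)"
  have e: "fp_counts Th mu L x (Suc k) i = fp_counts Th mu L x k i +
            (if S \<noteq> {} then (if i \<in> S then 1 else 0)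
             else (if i \<in> optset Th mu L then 1 else 0))"
    unfolding S_def by (simp only: fp_counts.simps Let_def)
  show ?thesis unfolding e by (simp split: if_split)
qed

lemma counts_bound:
  assumes "i \<in> optset Th mu L"
  shows "1 \<le> fp_counts Th mu L x k i \<and> fp_counts Th mu L x k i \<le> Suc k"
proof (induction k)
  case 0 then show ?case using assms by simp
next
  case (Suc k) then show ?case using counts_step[of Th mu L x k i] by linarith
qed

lemma sum_bound:
  fixes a :: "nat \<Rightarrow> real"
  assumes "a 1 \<le> 1" "\<And>k. k \<ge> 2 \<Longrightarrow> a k \<le> c / (real k * (real k - 1))" "c \<ge> 0"
  shows "(\<Sum>k = 1..T. a k) \<le> 1 + c"
proof -
  have *: "T \<ge> 1 \<Longrightarrow> (\<Sum>k = 1..T. a k) \<le> 1 + c - c / real T"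
  proof (induction T)
    case 0 then show ?case by simp
  next
    case (Suc n)
    show ?case
    proof (cases "n = 0")
      case True then show ?thesis using assms by simp
    next
      case False
      then have IH: "(\<Sum>k = 1..n. a k) \<le> 1 + c - c / real n" using Suc by simp
      have "a (Suc n) \<le> c / (real (Suc n) * (real (Suc n) - 1))"
        using assms(2)[of "Suc n"] False by simp
      also have "\<dots> = c / real n - c / real (Suc n)"
        using False by (simp add: field_simps)
      finally have "a (Suc n) \<le> c / real n - c / real (Suc n)" .
      then show ?thesis using IH by simp
    qed
  qed
  show ?thesis
  proof (cases "T = 0")
    case True then show ?thesis using assms(3) by simp
  next
    case False
    then have "(\<Sum>k = 1..T. a k) \<le> 1 + c - c / real T" using * by simp
    moreover have "c / real T \<ge> 0" using assms(3) by simp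
    ultimately show ?thesis by linarith
  qed
qed

theorem mainTheorem6:
  fixes M :: "'w measure"
    and X :: "nat \<Rightarrow> nat \<Rightarrow> 'w \<Rightarrow> real"
    and P :: "nat \<Rightarrow> 'th \<Rightarrow> real measure"
    and mu :: "nat \<Rightarrow> 'th \<Rightarrow> real"
    and Th :: "'th set" and tho :: 'th and L T :: nat
  assumes "prob_space M"
    and "finite Th" and "tho \<in> Th"
    and "\<And>i th. i \<in> {1..L} \<Longrightarrow> th \<in> Th \<Longrightarrow> prob_space (P i th)"
    and "\<And>i th. i \<in> {1..L} \<Longrightarrow> th \<in> Th \<Longrightarrow> sets (P i th) = sets borel"
    and "\<And>i th. i \<in> {1..L} \<Longrightarrow> th \<in> Th \<Longrightarrow> emeasure (P i th) {0..1} = 1"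
    and "\<And>i th. i \<in> {1..L} \<Longrightarrow> th \<in> Th \<Longrightarrow> mu i th = (\<integral>r. r \<partial>(P i th))"
    and "\<And>th. th \<in> Th \<Longrightarrow> \<exists>!i. i \<in> {1..L} \<and> (\<forall>j\<in>{1..L}. mu j th \<le> mu i th)"
    and "\<And>i tau. i \<in> {1..L} \<Longrightarrow> tau \<ge> 1 \<Longrightarrow> X i tau \<in> borel_measurable M"
    and "\<And>i tau. i \<in> {1..L} \<Longrightarrow> tau \<ge> 1 \<Longrightarrow> distr M borel (X i tau) = P i tho"
    and "prob_space.indep_vars M (\<lambda>_. borel) (\<lambda>p. X (fst p) (snd p)) ({1..L} \<times> {1..})"
  shows "(\<Sum>k = 1..T. measure M {w \<in> space M. astar mu L tho \<notin> fp_A Th mu L (\<lambda>i tau. X i tau w) k})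
           \<le> 4 * real (card (optset Th mu L))"
proof -
  interpret prob_space M by fact
  define A where "A = optset Th mu L"
  have ast: "astar mu L th \<in> {1..L}" if "th \<in> Th" for th
  proof -
    have "astar mu L th \<in> {1..L} \<and> (\<forall>j\<in>{1..L}. mu j th \<le> mu (astar mu L th) th)"
      unfolding astar_def by (rule theI'[OF assms(8)[OF that]])
    then show ?thesis by blast
  qed
  have AL: "A \<subseteq> {1..L}" unfolding A_def optset_def using ast by auto
  have finA: "finite A" unfolding A_def optset_def using assms(2) by simp
  have "A \<noteq> {}" using assms(3) unfolding A_def optset_def by auto
  then have cardA: "card A \<ge> 1" using finA by (simp add: card_gt_0_iff Suc_le_eq)
  define S where "S k = {w \<in> space M. astar mu L tho \<notin> fp_A Th mu L (\<lambda>i tau. X i tau w) k}" for k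
  define B where "B k i s = {w\<in>space M. sqrt (3 * ln (real k) / real s)
       \<le> \<bar>(\<Sum>tau\<in>{1..s}. X i tau w) / real s - mu i tho\<bar>}" for k i s
  have incl: "S k \<subseteq> (\<Union>p\<in>A \<times> {1..k}. B k (fst p) (snd p))" if "k \<ge> 1" for k
  proof
    fix w assume w: "w \<in> S k"
    define x where "x = (\<lambda>i tau. X i tau w)"
    define c where "c = fp_counts Th mu L x (k - 1)"
    have "astar mu L tho \<notin> episet Th mu L x k c"
      using w unfolding S_def fp_A_def x_def c_def by simp
    then obtain i where i: "i \<in> A" and
      gt: "\<not> \<bar>empmean x (c i) i - mu i tho\<bar> \<le> sqrt (3 * ln (real k) / real (c i))"
      unfolding episet_def A_def using assms(3) by blast
    have "1 \<le> c i \<and> c i \<le> k" using counts_bound[of i Th mu L x "k - 1"] i that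
      unfolding c_def A_def by simp
    moreover have "w \<in> B k i (c i)"
    proof -
      have ws: "w \<in> space M" using w unfolding S_def by simp
      have "sqrt (3 * ln (real k) / real (c i)) \<le> \<bar>empmean x (c i) i - mu i tho\<bar>"
        using gt by linarith
      then show ?thesis using ws unfolding B_def empmean_def x_def by simp
    qed
    ultimately show "w \<in> (\<Union>p\<in>A \<times> {1..k}. B k (fst p) (snd p))"
      using i by (intro UN_I[of "(i, c i)"]) auto
  qed
  have Bmeas: "B k i s \<in> sets M" if "i \<in> A" for k i s
  proof -
    have "\<And>tau. tau \<in> {1..s} \<Longrightarrow> X i tau \<in> borel_measurable M"
      using assms(9) that AL by auto
    then have [measurable]: "(\<lambda>w. \<Sum>tau\<in>{1..s}. X i tau w) \<in> borel_measurable M"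
      by (rule borel_measurable_sum)
    then have "(\<lambda>w. \<bar>(\<Sum>tau\<in>{1..s}. X i tau w) / real s - mu i tho\<bar>) \<in> borel_measurable M"
      by (intro borel_measurable_abs borel_measurable_diff borel_measurable_divide) auto
    then show ?thesis unfolding B_def by (intro borel_measurable_le) auto
  qed
  have Bbound: "measure M (B k i s) \<le> 2 * exp (-2 * real s * (sqrt (3 * ln (real k) / real s))\<^sup>2)"
    if "i \<in> A" "s \<ge> 1" "k \<ge> 1" for k i s
  proof -
    have iL: "i \<in> {1..L}" using that AL by auto
    have ind: "indep_vars (\<lambda>_. borel) (\<lambda>p. X (fst p) (snd p)) ((\<lambda>tau. (i, tau)) ` {1..s})"
      by (rule indep_vars_subset[OF assms(11)]) (use iL in auto)
    have ind2: "indep_vars (\<lambda>_. borel) (X i) {1..s}"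
      using indep_vars_reindex[OF ind] by (simp add: inj_on_def)
    show ?thesis unfolding B_def
    proof (rule hoeff[OF assms(1) ind2])
      show "\<And>tau. tau \<in> {1..s} \<Longrightarrow> distr M borel (X i tau) = P i tho"
        using assms(10) iL by simp
      show "\<And>tau. tau \<in> {1..s} \<Longrightarrow> X i tau \<in> borel_measurable M"
        using assms(9) iL by simp
      show "sets (P i tho) = sets borel" by (rule assms(5)[OF iL assms(3)])
      show "emeasure (P i tho) {0..1} = 1" by (rule assms(6)[OF iL assms(3)])
      show "prob_space (P i tho)" by (rule assms(4)[OF iL assms(3)])
      show "mu i tho = (\<integral>r. r \<partial>(P i tho))" by (rule assms(7)[OF iL assms(3)])
      show "1 \<le> s" by fact
      show "0 \<le> sqrt (3 * ln (real k) / real s)" using that by simp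
    qed
  qed
  have termk: "measure M (S k) \<le> real (card A) * real k * (2 * exp (- 6 * ln (real k)))"
    if "k \<ge> 1" for k
  proof -
    have "measure M (S k) \<le> measure M (\<Union>p\<in>A \<times> {1..k}. B k (fst p) (snd p))"
      by (rule finite_measure_mono[OF incl[OF that]]) (use Bmeas finA in auto)
    also have "\<dots> \<le> (\<Sum>p\<in>A \<times> {1..k}. measure M (B k (fst p) (snd p)))"
      by (rule finite_measure_subadditive_finite) (use Bmeas finA in auto)
    also have "\<dots> \<le> (\<Sum>p\<in>A \<times> {1..k}. 2 * exp (- 6 * ln (real k)))"
    proof (rule sum_mono)
      fix p assume p: "p \<in> A \<times> {1..k}"
      have "(sqrt (3 * ln (real k) / real (snd p)))\<^sup>2 = 3 * ln (real k) / real (snd p)"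
        using that p by simp
      then have "-2 * real (snd p) * (sqrt (3 * ln (real k) / real (snd p)))\<^sup>2 = - 6 * ln (real k)"
        using p by auto
      then show "measure M (B k (fst p) (snd p)) \<le> 2 * exp (- 6 * ln (real k))"
        using Bbound[of "fst p" "snd p" k] p that by auto
    qed
    also have "\<dots> = real (card A) * real k * (2 * exp (- 6 * ln (real k)))"
      using finA by (simp add: card_cartesian_product)
    finally show ?thesis .
  qed
  have "(\<Sum>k = 1..T. measure M (S k)) \<le> 1 + 2 * real (card A)"
  proof (rule sum_bound)
    show "measure M (S 1) \<le> 1" by simp
    show "0 \<le> 2 * real (card A)" by simp
    fix k :: nat assume k: "k \<ge> 2"
    have kpos: "real k > 0" using k by simp
    have e: "exp (- 6 * ln (real k)) = 1 / real k ^ 6"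
    proof -
      have "exp (- 6 * ln (real k)) = real k powr (- 6)"
        using kpos by (simp add: powr_def)
      also have "\<dots> = 1 / real k powr 6" by (simp add: powr_minus_divide)
      also have "real k powr 6 = real k ^ 6"
        using kpos powr_realpow[of "real k" 6] by simp
      finally show ?thesis .
    qed
    have le: "real k * (real k - 1) \<le> real k ^ 5"
    proof -
      have "real k * (real k - 1) \<le> real k * real k" using kpos by simp
      also have "\<dots> \<le> real k ^ 5"
        using k by (simp add: power2_eq_square[symmetric] power_increasing)
      finally show ?thesis .
    qed
    have pos2: "real k * (real k - 1) > 0" using k by simp
    have "measure M (S k) \<le> real (card A) * real k * (2 * (1 / real k ^ 6))"
      using termk[of k] k e by simp
    also have "\<dots> = 2 * real (card A) / real k ^ 5"
      using kpos by (simp add: field_simps power_eq_if)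
    also have "\<dots> \<le> 2 * real (card A) / (real k * (real k - 1))"
    proof (rule divide_left_mono)
      show "real k * (real k - 1) \<le> real k ^ 5" by (rule le)
      show "0 \<le> 2 * real (card A)" by simp
      have "0 < real k ^ 5" using kpos by simp
      then show "0 < real k ^ 5 * (real k * (real k - 1))" using pos2 by (rule mult_pos_pos)
    qed
    finally show "measure M (S k) \<le> 2 * real (card A) / (real k * (real k - 1))" .
  qed
  also have "\<dots> \<le> 4 * real (card A)" using cardA by simp
  finally show ?thesis unfolding S_def A_def .
qed

end
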